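(* The Open CbNeed reduction $\to_{\mathrm{ond}}$ on programs is deterministic: if $p\to_{\mathrm{ond}} q$ and $p\to_{\mathrm{ond}} q'$ then $q=q'$ (up to $\alpha$-renaming).
   Context: Syntax (split presentation). Terms: $t,u,s ::= x \mid \lambda x.t \mid t\,u$. Values: $v ::= \lambda x.t$ (variables are not values). Environments: $E ::= \epsilon \mid E[x\leftarrow t]$. Programs: $p ::= (t,E)$. In $E[x\leftarrow t]$ and $(u,E[x\leftarrow t])$ the variable $x$ is bound in $E$ and $u$; everything is up to $\alpha$-renaming, appended ES bind fresh variables. Appending: $(t,E)@[x\leftarrow u] := (t,E[x\leftarrow u])$. Inert terms and fireballs: $i ::= x \mid i\,f$, $f ::= v \mid i$. Open term evaluation contexts: $\mathcal{H} ::= \langle\cdot\rangle \mid \mathcal{H}\,t \mid i\,\mathcal{H}$. Term contexts: $C ::= \langle\cdot\rangle \mid C\,t \mid t\,C$. Environment contexts: $G ::= E[x\leftarrow C] \mid G[x\leftarrow u]$. Program contexts: $P ::= (C,E) \mid (t,G)$, with $(C,E)@[x\leftarrow u] := (C,E[x\leftarrow u])$, $(t,G)@[x\leftarrow u] := (t,G[x\leftarrow u])$. Plugging: $(C,E)\langle (t,E')\rangle := (C\langle t\rangle, E'E)$; $(u,E[x\leftarrow C])\langle (t,E')\rangle := (u, E[x\leftarrow C\langle t\rangle]E')$; $(u,G[x\leftarrow s])\langle (t,E)\rangle := ((u,G)\langle(t,E)\rangle)@[x\leftarrow s]$; $P\langle t\rangle := P\langle (t,\epsilon)\rangle$. For $p=(t,E)$,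 $p@[x\leftarrow\mathcal{H}]$ denotes the program context $(t,E[x\leftarrow\mathcal{H}])$. Look-up $P(x)$: $P(x)=t$ if the list of ES of $P$ contains $[x\leftarrow t]$ with $t$ a term, and $P(x)=\bot$ otherwise. $v^{\alpha}$ denotes a copy of $v$ with bound variables renamed to fresh ones. Needed variables: $nv(x)=\{x\}$, $nv(\lambda x.t)=\emptyset$, $nv(t\,u)=nv(t)\cup nv(u)$; $nv((t,\epsilon))=nv(t)$, $nv((t,E[x\leftarrow u]))=nv((t,E))$ if $x\notin nv((t,E))$, else $(nv((t,E))\setminus\{x\})\cup nv(u)$; $nv(\langle\cdot\rangle)=\emptyset$, $nv(\mathcal{H}\,t)=nv(\mathcal{H})$, $nv(i\,\mathcal{H})=nv(i)\cup nv(\mathcal{H})$. Open evaluation contexts $P\in\mathcal{E}_{{\mathcal{V}}}$, inductively: $(\mathcal{H},\epsilon)\in\mathcal{E}_{nv(\mathcal{H})}$; if $P\in\mathcal{E}_{{\mathcal{V}}}$, $x\in{\mathcal{V}}$, $i$ inert then $P@[x\leftarrow i]\in\mathcal{E}_{({\mathcal{V}}\setminus\{x\})\cup nv(i)}$; if $P\in\mathcal{E}_{{\mathcal{V}}}$, $x\notin{\mathcal{V}}$ then $P@[x\leftarrow t]\in\mathcal{E}_{{\mathcal{V}}}$; if $P\in\mathcal{E}_{{\mathcal{V}}}$, $x\notin{\mathcal{V}}$ then $P\langle x\rangle@[x\leftarrow\mathcal{H}]\in\mathcal{E}_{{\mathcal{V}}\cup nv(\mathcal{H})}$ ($x$ not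 in the domain of $P$). Open CbNeed rules, for $P\in\mathcal{E}_{{\mathcal{V}}}$ for some ${\mathcal{V}}$: $P\langle(\lambda x.t)u\rangle \to_{\mathrm{om}} P\langle (t,[x\leftarrow u])\rangle$; $P\langle x\rangle\to_{\mathrm{oe}} P\langle v^{\alpha}\rangle$ if $P(x)=v$. $\to_{\mathrm{ond}} := \to_{\mathrm{om}}\cup\to_{\mathrm{oe}}$. *)

theory Defs
  imports Main
begin

type_synonym var = nat

datatype trm = Var var | Lam var trm | App trm trm

text \<open>Environments: E[x<-t] is represented as E @ [(x,t)], i.e. the LAST element
  of the list is the outermost explicit substitution.  Programs are pairs (t,E).\<close>
type_synonym env = "(var \<times> trm) list"
type_synonym prog = "trm \<times> env"

fun is_value :: "trm \<Rightarrow> bool" where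
  "is_value (Lam x t) = True"
| "is_value _ = False"

fun inert :: "trm \<Rightarrow> bool" where
  "inert (Var x) = True"
| "inert (App i f) = (inert i \<and> (is_value f \<or> inert f))"
| "inert (Lam x t) = False"

fun fv :: "trm \<Rightarrow> var set" where
  "fv (Var x) = {x}"
| "fv (Lam x t) = fv t - {x}"
| "fv (App t u) = fv t \<union> fv u"

fun bvars :: "trm \<Rightarrow> var list" where
  "bvars (Var x) = []"
| "bvars (Lam x t) = x # bvars t"
| "bvars (App t u) = bvars t @ bvars u"

fun names :: "trm \<Rightarrow> var set" where
  "names (Var x) = {x}"
| "names (Lam x t) = insert x (names t)"
| "names (App t u) = names t \<union> names u"

text \<open>free variables of a program, computed on the reversed environment (outermost first)\<close>
fun fvR :: "trm \<Rightarrow> env \<Rightarrow> var set" where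
  "fvR t [] = fv t"
| "fvR t ((x,s) # R) = (fvR t R - {x}) \<union> fv s"

definition fvp :: "prog \<Rightarrow> var set" where
  "fvp p = fvR (fst p) (rev (snd p))"

definition pbinders :: "prog \<Rightarrow> var list" where
  "pbinders p = bvars (fst p) @ concat (map (\<lambda>(x,s). x # bvars s) (snd p))"

definition pnames :: "prog \<Rightarrow> var set" where
  "pnames p = names (fst p) \<union> (\<Union>(x,s)\<in>set (snd p). insert x (names s))"

definition well_named :: "prog \<Rightarrow> bool" where
  "well_named p = (distinct (pbinders p) \<and> set (pbinders p) \<inter> fvp p = {})"

fun alv :: "(var \<times> var) list \<Rightarrow> var \<Rightarrow> var \<Rightarrow> bool" where
  "alv [] x y = (x = y)"
| "alv ((a,b) # G) x y = (if x = a \<or> y = b then x = a \<and> y = b else alv G x y)"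

fun alphaT :: "(var \<times> var) list \<Rightarrow> trm \<Rightarrow> trm \<Rightarrow> bool" where
  "alphaT G (Var x) (Var y) = alv G x y"
| "alphaT G (Lam x t) (Lam y u) = alphaT ((x,y) # G) t u"
| "alphaT G (App t1 t2) (App u1 u2) = (alphaT G t1 u1 \<and> alphaT G t2 u2)"
| "alphaT G _ _ = False"

text \<open>In (u, E[x<-s]) the variable x is bound in E and u (not in s).  The function
  works on reversed environments (outermost ES first).\<close>
fun alphaR :: "(var \<times> var) list \<Rightarrow> trm \<Rightarrow> trm \<Rightarrow> env \<Rightarrow> env \<Rightarrow> bool" where
  "alphaR G t u [] [] = alphaT G t u"
| "alphaR G t u ((x,s) # R) ((y,s') # R') = (alphaT G s s' \<and> alphaR ((x,y) # G) t u R R')"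
| "alphaR G t u _ _ = False"

definition alpha_trm :: "trm \<Rightarrow> trm \<Rightarrow> bool" where
  "alpha_trm t u = alphaT [] t u"

definition alpha_prog :: "prog \<Rightarrow> prog \<Rightarrow> bool" where
  "alpha_prog p q = alphaR [] (fst p) (fst q) (rev (snd p)) (rev (snd q))"

datatype ctx = Hole | CAppL ctx trm | CAppR trm ctx

fun plugc :: "ctx \<Rightarrow> trm \<Rightarrow> trm" where
  "plugc Hole t = t"
| "plugc (CAppL C u) t = App (plugc C t) u"
| "plugc (CAppR u C) t = App u (plugc C t)"

fun is_H :: "ctx \<Rightarrow> bool" where
  "is_H Hole = True"
| "is_H (CAppL H t) = is_H H"
| "is_H (CAppR i H) = (inert i \<and> is_H H)"

fun nv :: "trm \<Rightarrow> var set" where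
  "nv (Var x) = {x}"
| "nv (Lam x t) = {}"
| "nv (App t u) = nv t \<union> nv u"

fun nvC :: "ctx \<Rightarrow> var set" where
  "nvC Hole = {}"
| "nvC (CAppL H t) = nvC H"
| "nvC (CAppR i H) = nv i \<union> nvC H"

text \<open>Program contexts: PCt C E is (C,E);  PCe u E1 x C E2 is (u, E1[x<-C]E2),
  i.e. the environment context G = E1[x<-C] followed by the ES of E2.\<close>
datatype pctx = PCt ctx env | PCe trm env var ctx env

fun pplug :: "pctx \<Rightarrow> prog \<Rightarrow> prog" where
  "pplug (PCt C E) (t, E') = (plugc C t, E' @ E)"
| "pplug (PCe u E1 x C E2) (t, E') = (u, E1 @ [(x, plugc C t)] @ E' @ E2)"

definition pplugt :: "pctx \<Rightarrow> trm \<Rightarrow> prog" where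
  "pplugt P t = pplug P (t, [])"

fun papp :: "pctx \<Rightarrow> var \<Rightarrow> trm \<Rightarrow> pctx" where
  "papp (PCt C E) x u = PCt C (E @ [(x,u)])"
| "papp (PCe t E1 y C E2) x u = PCe t E1 y C (E2 @ [(x,u)])"

text \<open>p@[x<-H] for a program p = (t,E) is the program context (t, E[x<-H]).\<close>
fun papp_ctx :: "prog \<Rightarrow> var \<Rightarrow> ctx \<Rightarrow> pctx" where
  "papp_ctx (t, E) x H = PCe t E x H []"

fun pdom :: "pctx \<Rightarrow> var set" where
  "pdom (PCt C E) = fst ` set E"
| "pdom (PCe u E1 y C E2) = fst ` set E1 \<union> {y} \<union> fst ` set E2"

text \<open>Look-up P(x): the term t such that [x<-t] is among the ES of P (None = bottom).\<close>
fun plookup :: "pctx \<Rightarrow> var \<Rightarrow> trm option" where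
  "plookup (PCt C E) x = map_of E x"
| "plookup (PCe u E1 y C E2) x = map_of (E1 @ E2) x"

inductive evctx :: "pctx \<Rightarrow> var set \<Rightarrow> bool" where
  ev_base: "is_H H \<Longrightarrow> evctx (PCt H []) (nvC H)"
| ev_inert: "\<lbrakk>evctx P V; x \<in> V; inert i; x \<notin> pdom P\<rbrakk>
      \<Longrightarrow> evctx (papp P x i) ((V - {x}) \<union> nv i)"
| ev_skip: "\<lbrakk>evctx P V; x \<notin> V; x \<notin> pdom P\<rbrakk> \<Longrightarrow> evctx (papp P x t) V"
| ev_hered: "\<lbrakk>evctx P V; x \<notin> V; is_H H; x \<notin> pdom P\<rbrakk>
      \<Longrightarrow> evctx (papp_ctx (pplugt P (Var x)) x H) (V \<union> nvC H)"

inductive ond_raw :: "prog \<Rightarrow> prog \<Rightarrow> bool" where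
  om: "\<lbrakk>evctx P V; well_named (pplugt P (App (Lam x t) u))\<rbrakk>
      \<Longrightarrow> ond_raw (pplugt P (App (Lam x t) u)) (pplug P (t, [(x, u)]))"
| oe: "\<lbrakk>evctx P V; well_named (pplugt P (Var x)); plookup P x = Some v; is_value v;
        alpha_trm v v'; set (bvars v') \<inter> pnames (pplugt P (Var x)) = {}\<rbrakk>
      \<Longrightarrow> ond_raw (pplugt P (Var x)) (pplugt P v')"

definition ond :: "prog \<Rightarrow> prog \<Rightarrow> bool" where
  "ond p q = (\<exists>p0 q0. alpha_prog p p0 \<and> ond_raw p0 q0 \<and> alpha_prog q0 q)"

end

theory Submission
  imports Defs
begin


lemma alv_Cons: "alv ((a,b)#G) x y \<longleftrightarrow> (x = a \<and> y = b) \<or> (x \<noteq> a \<and> y \<noteq> b \<and> alv G x y)"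
  by simp
declare alv.simps(2)[simp del]
declare alv_Cons[simp]
lemma alv_sym: "alv G x y \<Longrightarrow> alv (map (\<lambda>(a,b). (b,a)) G) y x"
proof (induction G)
  case (Cons p G) then show ?case by (cases p) auto
qed simp
lemma alphaT_sym: "alphaT G t u \<Longrightarrow> alphaT (map (\<lambda>(a,b). (b,a)) G) u t"
  by (induction G t u rule: alphaT.induct) (auto intro: alv_sym)

lemma alv_trans: "map snd G1 = map fst G2 \<Longrightarrow> alv G1 x y \<Longrightarrow> alv G2 y z
  \<Longrightarrow> alv (zip (map fst G1) (map snd G2)) x z"
proof (induction G1 arbitrary: G2)
  case Nil then show ?case by simp
next
  case (Cons p G1)
  obtain a b where p: "p = (a,b)" by force
  from Cons.prems(1) p obtain c G2' where G2: "G2 = (b,c) # G2'" "map snd G1 = map fst G2'"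
    by (cases G2) auto
  show ?case using Cons.prems Cons.IH[OF G2(2)] p G2 by auto
qed

lemma alphaT_trans: "alphaT G1 t u \<Longrightarrow> alphaT G2 u w \<Longrightarrow> map snd G1 = map fst G2
  \<Longrightarrow> alphaT (zip (map fst G1) (map snd G2)) t w"
proof (induction G1 t u arbitrary: G2 w rule: alphaT.induct)
  case (1 G x y)
  from "1.prems"(2) obtain z where w: "w = Var z" "alv G2 y z" by (cases w) auto
  then show ?case using alv_trans "1.prems" by auto
next
  case (2 G x t y u)
  from "2.prems"(2) obtain z w' where w: "w = Lam z w'" "alphaT ((y,z)#G2) u w'" by (cases w) auto
  have h1: "alphaT ((x,y)#G) t u" using "2.prems" by simp
  from "2.IH"[OF h1 w(2)] "2.prems"(3) show ?case using w by simp
next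
  case (3 G t1 t2 u1 u2)
  from "3.prems"(2) obtain w1 w2 where w: "w = App w1 w2" "alphaT G2 u1 w1" "alphaT G2 u2 w2"
    by (cases w) auto
  have h: "alphaT G t1 u1" "alphaT G t2 u2" using "3.prems" by simp_all
  have "alphaT (zip (map fst G) (map snd G2)) t1 w1" using "3.IH"(1)[OF h(1) w(2) "3.prems"(3)] .
  moreover have "alphaT (zip (map fst G) (map snd G2)) t2 w2" using "3.IH"(2)[OF h(2) w(3) "3.prems"(3)] .
  ultimately show ?case using w by simp
qed auto

lemma alphaR_sym: "alphaR G t u R R' \<Longrightarrow> alphaR (map (\<lambda>(a,b). (b,a)) G) u t R' R"
  by (induction G t u R R' rule: alphaR.induct) (auto intro: alphaT_sym)

lemma alphaR_trans: "alphaR G1 t u R1 R2 \<Longrightarrow> alphaR G2 u w R2 R3 \<Longrightarrow> map snd G1 = map fst G2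
  \<Longrightarrow> alphaR (zip (map fst G1) (map snd G2)) t w R1 R3"
proof (induction G1 t u R1 R2 arbitrary: G2 R3 rule: alphaR.induct)
  case (1 G t u)
  from "1.prems"(2) have "R3 = []" "alphaT G2 u w" by (cases R3; simp)+
  then show ?case using "1.prems" alphaT_trans by simp
next
  case (2 G t u x s R y s' R')
  from "2.prems"(2) obtain z b R3' where R3: "R3 = (z,b) # R3'" "alphaT G2 s' b"
     "alphaR ((y,z)#G2) u w R' R3'"
    by (cases R3) auto
  have h1: "alphaR ((x,y)#G) t u R R'" "alphaT G s s'" using "2.prems" by simp_all
  from "2.IH"[OF h1(1) R3(3)] "2.prems"(3)
  have "alphaR ((x, z) # zip (map fst G) (map snd G2)) t w R R3'" by simp
  moreover have "alphaT (zip (map fst G) (map snd G2)) s b"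
    using alphaT_trans[OF h1(2) R3(2) "2.prems"(3)] .
  ultimately show ?case unfolding R3(1) by simp
qed auto

lemma alpha_prog_sym: "alpha_prog p q \<Longrightarrow> alpha_prog q p"
  unfolding alpha_prog_def using alphaR_sym[of "[]"] by fastforce

lemma alpha_prog_trans: "alpha_prog p q \<Longrightarrow> alpha_prog q r \<Longrightarrow> alpha_prog p r"
  unfolding alpha_prog_def using alphaR_trans[of "[]" _ _ _ _ "[]"] by fastforce

lemma alpha_trm_sym: "alpha_trm p q \<Longrightarrow> alpha_trm q p"
  unfolding alpha_trm_def using alphaT_sym[of "[]"] by fastforce

lemma alpha_trm_trans: "alpha_trm p q \<Longrightarrow> alpha_trm q r \<Longrightarrow> alpha_trm p r"
  unfolding alpha_trm_def using alphaT_trans[of "[]" _ _ "[]"] by fastforce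

section \<open>Identity environments\<close>

definition idG :: "var list \<Rightarrow> (var \<times> var) list" where
  "idG L = map (\<lambda>a. (a,a)) L"

lemma alv_idG0: "alv (idG L) x y = (x = y)"
  unfolding idG_def by (induction L) auto

lemma alv_idG: "alv (G @ idG L) x y = alv G x y"
  by (induction G x y rule: alv.induct) (auto simp: alv_idG0)

lemma alphaT_idG: "alphaT G a b \<Longrightarrow> alphaT (G @ idG L) a b"
  by (induction G a b rule: alphaT.induct) (auto simp: alv_idG)

lemma alphaT_idG0: "alphaT [] a b \<Longrightarrow> alphaT (idG L) a b"
  using alphaT_idG[of "[]"] by auto

lemma alphaT_refl_idG: "alphaT (idG L) t t"
proof (induction t arbitrary: L)
  case (Var x) then show ?case using alv_idG[of "[]" L x x] by simp
next
  case (Lam x t) then show ?case using Lam[of "x # L"] by (simp add: idG_def)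
qed auto

lemma alphaT_plugc: "(\<And>L. alphaT (idG L) a b) \<Longrightarrow> alphaT (idG L) (plugc C a) (plugc C b)"
  by (induction C) (auto simp: alphaT_refl_idG)

lemma alphaR_idG: "list_all2 (\<lambda>(x,s) (y,s'). x = y \<and> (\<forall>L. alphaT (idG L) s s')) R R2
  \<Longrightarrow> (\<And>L. alphaT (idG L) t t') \<Longrightarrow> alphaR (idG L) t t' R R2"
proof (induction R arbitrary: R2 L)
  case Nil then show ?case by auto
next
  case (Cons p R)
  then obtain q R2' where "R2 = q # R2'" by (cases R2) auto
  with Cons show ?case
    using Cons.IH[of R2' "fst p # L"] by (cases p; cases q) (auto simp: idG_def)
qed

lemma list_all2_refl_env: "list_all2 (\<lambda>(x,s) (y,s'). x = y \<and> (\<forall>L. alphaT (idG L) s s')) R R"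
  by (induction R) (auto simp: alphaT_refl_idG)

lemma alpha_prog_pplugt:
  assumes "alpha_trm a b" shows "alpha_prog (pplugt P a) (pplugt P b)"
proof -
  have ab: "\<And>L. alphaT (idG L) a b" using assms alphaT_idG0 unfolding alpha_trm_def by blast
  have abC: "\<And>L C. alphaT (idG L) (plugc C a) (plugc C b)" using alphaT_plugc[OF ab] by blast
  have id0: "idG [] = []" by (simp add: idG_def)
  show ?thesis
  proof (cases P)
    case (PCt C E)
    have "alphaR (idG []) (plugc C a) (plugc C b) (rev E) (rev E)"
      by (rule alphaR_idG[OF list_all2_refl_env abC])
    then have "alphaR [] (plugc C a) (plugc C b) (rev E) (rev E)" unfolding id0 .
    moreover have "pplugt P a = (plugc C a, E)" "pplugt P b = (plugc C b, E)"
      using PCt unfolding pplugt_def by simp_all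
    ultimately show ?thesis unfolding alpha_prog_def by simp
  next
    case (PCe u E1 y C E2)
    have "list_all2 (\<lambda>(x,s) (y,s'). x = y \<and> (\<forall>L. alphaT (idG L) s s'))
      (rev E2 @ [(y, plugc C a)] @ rev E1) (rev E2 @ [(y, plugc C b)] @ rev E1)"
      using abC list_all2_refl_env
      by (intro list_all2_appendI) auto
    from alphaR_idG[OF this alphaT_refl_idG, of "[]"]
    have "alphaR [] u u (rev E2 @ [(y, plugc C a)] @ rev E1) (rev E2 @ [(y, plugc C b)] @ rev E1)"
      unfolding id0 .
    moreover have "rev (snd (pplugt P a)) = rev E2 @ [(y, plugc C a)] @ rev E1"
      "rev (snd (pplugt P b)) = rev E2 @ [(y, plugc C b)] @ rev E1"
      "fst (pplugt P a) = u" "fst (pplugt P b) = u"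
      using PCe unfolding pplugt_def by simp_all
    ultimately show ?thesis unfolding alpha_prog_def by simp
  qed
qed



fun appES :: "prog \<Rightarrow> var \<Rightarrow> trm \<Rightarrow> prog" where
  "appES (t, E) x s = (t, E @ [(x, s)])"

lemma pplugt_papp: "pplugt (papp P x s) r = appES (pplugt P r) x s"
  by (cases P) (auto simp: pplugt_def)

lemma pplugt_papp_ctx: "pplugt (papp_ctx p x H) r = appES p x (plugc H r)"
  by (cases p) (auto simp: pplugt_def)

lemma pplugt_base: "pplugt (PCt H []) r = (plugc H r, [])"
  by (simp add: pplugt_def)

lemma appES_inj: "appES p x s = appES p' x' s' \<longleftrightarrow> p = p' \<and> x = x' \<and> s = s'"
  by (cases p; cases p') auto

lemma appES_ne: "appES p x s \<noteq> (t, [])"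
  by (cases p) auto

lemma pdom_pplugt: "pdom P = fst ` set (snd (pplugt P r))"
  by (cases P) (auto simp: pplugt_def)

lemma plookup_dom: "plookup P y = Some v \<Longrightarrow> y \<in> pdom P"
  by (cases P) (auto dest: map_of_SomeD intro: rev_image_eqI)

lemma plookup_None: "y \<notin> pdom P \<Longrightarrow> plookup P y = None"
  using plookup_dom by (cases "plookup P y") auto

lemma plookup_papp_old: "plookup P y = Some v \<Longrightarrow> plookup (papp P x s) y = Some v"
  by (cases P) (auto simp: map_add_def split: option.splits)

lemma map_of_None': "x \<notin> fst ` set E \<Longrightarrow> map_of E x = None"
  by (simp add: map_of_eq_None_iff)

lemma plookup_papp_new: "x \<notin> pdom P \<Longrightarrow> plookup (papp P x s) x = Some s"
  by (cases P) (auto simp: map_add_def map_of_None' split: option.splits)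

lemma pdom_papp: "pdom (papp P x s) = insert x (pdom P)"
  by (cases P) auto

definition cand :: "trm \<Rightarrow> bool" where
  "cand r = ((\<exists>x t u. r = App (Lam x t) u) \<or> (\<exists>y. r = Var y))"

lemma plugc_Lam: "plugc C r = Lam x t \<Longrightarrow> C = Hole \<and> r = Lam x t"
  by (cases C) auto

lemma value_plug: "cand r \<Longrightarrow> \<not> is_value (plugc C r)"
  by (cases C) (auto simp: cand_def)

lemma inert_not_value: "inert s \<Longrightarrow> \<not> is_value s"
  by (cases s) auto

lemma nv_plug: "y \<in> nv (plugc C (Var y))"
  by (induction C) auto

lemma inert_plug: "cand r \<Longrightarrow> inert (plugc C r) \<Longrightarrow> \<exists>y. r = Var y \<and> y \<in> nv (plugc C r)"
proof (induction C)
  case Hole then show ?case by (auto simp: cand_def)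
next
  case (CAppL C t) then show ?case by auto
next
  case (CAppR t C)
  then have "inert (plugc C r)" using value_plug by auto
  then show ?case using CAppR by auto
qed

lemma nv_fv: "nv t \<subseteq> fv t"
  by (induction t) auto

lemma nvC_fv: "nvC C \<subseteq> fv (plugc C r)"
  by (induction C) (use nv_fv in auto)

section \<open>Uniqueness of decomposition, term level\<close>

lemma U_H: "is_H H \<Longrightarrow> is_H H' \<Longrightarrow> plugc H r = plugc H' r' \<Longrightarrow> cand r \<Longrightarrow> cand r' \<Longrightarrow>
  (H = H' \<and> r = r') \<or> (\<exists>y. r = Var y \<and> y \<in> nvC H') \<or> (\<exists>y. r' = Var y \<and> y \<in> nvC H)"
proof (induction H arbitrary: H')
  case Hole
  show ?case
  proof (cases H')
    case (CAppL H2 w)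
    then show ?thesis using Hole by (auto simp: cand_def dest!: plugc_Lam)
  next
    case (CAppR i H2)
    then show ?thesis using Hole by (auto simp: cand_def)
  qed (use Hole in auto)
next
  case (CAppL H1 w)
  show ?case
  proof (cases H')
    case Hole
    then show ?thesis using CAppL.prems by (auto simp: cand_def dest!: plugc_Lam)
  next
    case (CAppL H2 w')
    then show ?thesis using CAppL.IH[of H2] CAppL.prems by auto
  next
    case (CAppR i H2)
    then have "inert (plugc H1 r)" using CAppL.prems by auto
    from inert_plug[OF CAppL.prems(4) this] CAppR CAppL.prems show ?thesis by auto
  qed
next
  case (CAppR i H1)
  show ?case
  proof (cases H')
    case Hole
    then show ?thesis using CAppR by (auto simp: cand_def)
  next
    case (CAppL H2 w)
    then have "inert (plugc H2 r')" using CAppR.prems by auto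
    from inert_plug[OF CAppR.prems(5) this] CAppL CAppR.prems show ?thesis by auto
  next
    case (CAppR i' H2)
    then show ?thesis using CAppR.IH[of H2] CAppR.prems by auto
  qed
qed



section \<open>Combined evaluation contexts\<close>

definition addrel :: "var set \<Rightarrow> var \<Rightarrow> trm \<Rightarrow> var set \<Rightarrow> bool" where
  "addrel V0 x s V = ((x \<in> V0 \<and> inert s \<and> V = (V0 - {x}) \<union> nv s) \<or> (x \<notin> V0 \<and> V = V0))"

inductive evc :: "pctx \<Rightarrow> var set \<Rightarrow> bool" where
  c_base: "is_H H \<Longrightarrow> evc (PCt H []) (nvC H)"
| c_app: "\<lbrakk>evc P V0; x \<notin> pdom P; addrel V0 x s V\<rbrakk> \<Longrightarrow> evc (papp P x s) V"
| c_hered: "\<lbrakk>evc P V; x \<notin> V; is_H H; x \<notin> pdom P\<rbrakk>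
      \<Longrightarrow> evc (papp_ctx (pplugt P (Var x)) x H) (V \<union> nvC H)"

lemma evctx_evc: "evctx P V \<Longrightarrow> evc P V"
proof (induction rule: evctx.induct)
  case (ev_base H) then show ?case by (rule c_base)
next
  case (ev_inert P V x i) then show ?case by (intro c_app) (auto simp: addrel_def)
next
  case (ev_skip P V x t) then show ?case by (intro c_app) (auto simp: addrel_def)
next
  case (ev_hered P V x H) then show ?case by (intro c_hered) auto
qed

definition D :: "pctx \<Rightarrow> trm \<Rightarrow> var set \<Rightarrow> bool" where
  "D P r V' = (\<exists>y. r = Var y \<and> (y \<in> V' \<or> (\<exists>s. plookup P y = Some s \<and> \<not> is_value s)))"

lemma D_papp: assumes "D P0 r V0'" "x \<notin> pdom P0" "addrel V0' x s V'" shows "D (papp P0 x s) r V'"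
proof -
  from assms(1) obtain y where y: "r = Var y" "y \<in> V0' \<or> (\<exists>s'. plookup P0 y = Some s' \<and> \<not> is_value s')"
    unfolding D_def by blast
  from y(2) show ?thesis
  proof
    assume "\<exists>s'. plookup P0 y = Some s' \<and> \<not> is_value s'"
    then obtain s' where "plookup P0 y = Some s'" "\<not> is_value s'" by blast
    then show ?thesis using plookup_papp_old[of P0 y s' x s] y(1) unfolding D_def by blast
  next
    assume yV: "y \<in> V0'"
    show ?thesis
    proof (cases "y = x")
      case True
      have "plookup (papp P0 x s) x = Some s" using plookup_papp_new assms(2) .
      moreover have "x \<in> V0' \<Longrightarrow> \<not> is_value s" using assms(3) inert_not_value unfolding addrel_def by blast
      ultimately show ?thesis using True yV y(1) unfolding D_def by blast
    next
      case False
      then have "y \<in> V'" using yV assms(3) unfolding addrel_def by blast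
      then show ?thesis using y(1) unfolding D_def by blast
    qed
  qed
qed

lemma D_hered: assumes "D P0 r V0'" shows "D (papp P0 x s) r (V0' \<union> W)"
proof -
  from assms(1) obtain y where y: "r = Var y" "y \<in> V0' \<or> (\<exists>s'. plookup P0 y = Some s' \<and> \<not> is_value s')"
    unfolding D_def by blast
  then show ?thesis unfolding D_def using plookup_papp_old[of P0 y _ x s] by blast
qed

lemma mixed:
  assumes x1: "x \<notin> pdom P0" and ar: "addrel V0 x (plugc H r') V"
    and x2: "x \<notin> V0'" "x \<notin> pdom P0'" and c: "cand r'"
    and IH: "(P0 = P0' \<and> r = Var x \<and> V0 = V0') \<or> D P0 r V0' \<or> D P0' (Var x) V0"
  shows "D (papp P0 x (plugc H r')) r (V0' \<union> nvC H) \<or> D (papp_ctx (pplugt P0' (Var x)) x H) r' V"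
  using IH
proof (elim disjE)
  assume eq: "P0 = P0' \<and> r = Var x \<and> V0 = V0'"
  have "plookup (papp P0 x (plugc H r')) x = Some (plugc H r')" using plookup_papp_new x1 .
  then show ?thesis using eq value_plug[OF c] unfolding D_def by blast
next
  assume "D P0 r V0'"
  then show ?thesis using D_hered by blast
next
  assume "D P0' (Var x) V0"
  then have "x \<in> V0" unfolding D_def using plookup_None[OF x2(2)] by auto
  then have "inert (plugc H r')" "V = (V0 - {x}) \<union> nv (plugc H r')" using ar unfolding addrel_def by auto
  with inert_plug[OF c] show ?thesis unfolding D_def by auto
qed

lemma addrel_det: "addrel V0 x s V \<Longrightarrow> addrel V0 x s V' \<Longrightarrow> V = V'"
  unfolding addrel_def by auto

lemma U: "evc P V \<Longrightarrow> evc P' V' \<Longrightarrow> pplugt P r = pplugt P' r' \<Longrightarrow> cand r \<Longrightarrow> cand r' \<Longrightarrow>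
   (P = P' \<and> r = r' \<and> V = V') \<or> D P r V' \<or> D P' r' V"
proof (induction arbitrary: P' V' r r' rule: evc.induct)
  case (c_base H)
  note hH = c_base.hyps and pr = c_base.prems
  from pr(1) show ?case
  proof (cases rule: evc.cases)
    case (c_base H')
    then have "plugc H r = plugc H' r'" using pr by (simp add: pplugt_base)
    from U_H[OF hH \<open>is_H H'\<close> this pr(3,4)] show ?thesis
      using c_base unfolding D_def by auto
  next
    case (c_app P0 V0 x s)
    then show ?thesis using pr by (simp add: pplugt_base pplugt_papp appES_ne[symmetric])
  next
    case (c_hered P0 V0 x H')
    then show ?thesis using pr
      by (simp add: pplugt_base pplugt_papp_ctx appES_ne[symmetric])
  qed
next
  case (c_app P0 V0 x s V)
  note h = c_app.hyps and IH = c_app.IH and pr = c_app.prems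
  from pr(1) show ?case
  proof (cases rule: evc.cases)
    case (c_base H')
    then show ?thesis using pr by (simp add: pplugt_base pplugt_papp appES_ne)
  next
    case (c_app P0' V0' x' s')
    then have e: "pplugt P0 r = pplugt P0' r'" "x' = x" "s' = s"
      using pr by (simp_all add: pplugt_papp appES_inj)
    from IH[OF \<open>evc P0' V0'\<close> e(1) pr(3,4)]
    show ?thesis
    proof (elim disjE)
      assume "P0 = P0' \<and> r = r' \<and> V0 = V0'"
      then show ?thesis using c_app h e addrel_det by blast
    next
      assume "D P0 r V0'"
      then show ?thesis using D_papp c_app h e by blast
    next
      assume "D P0' r' V0"
      then show ?thesis using D_papp c_app h e by blast
    qed
  next
    case (c_hered P0' V0' x' H)
    then have e: "pplugt P0 r = pplugt P0' (Var x)" "x' = x" "s = plugc H r'"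
      using pr by (auto simp: pplugt_papp pplugt_papp_ctx appES_inj)
    have "cand (Var x)" by (simp add: cand_def)
    from IH[OF \<open>evc P0' V0'\<close> e(1) pr(3) this]
    have "(P0 = P0' \<and> r = Var x \<and> V0 = V0') \<or> D P0 r V0' \<or> D P0' (Var x) V0" .
    from mixed[OF h(2) _ _ _ pr(4) this, of H V] c_hered e h
    show ?thesis by auto
  qed
next
  case (c_hered P0 V0 x H)
  note h = c_hered.hyps and IH = c_hered.IH and pr = c_hered.prems
  from pr(1) show ?case
  proof (cases rule: evc.cases)
    case (c_base H')
    then show ?thesis using pr by (simp add: pplugt_base pplugt_papp_ctx appES_ne)
  next
    case (c_app P0' V0' x' s')
    then have e: "pplugt P0' r' = pplugt P0 (Var x)" "x' = x" "s' = plugc H r"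
      using pr by (auto simp: pplugt_papp pplugt_papp_ctx appES_inj)
    have "cand (Var x)" by (simp add: cand_def)
    from IH[OF \<open>evc P0' V0'\<close> e(1)[symmetric] this pr(4)]
    have "(P0 = P0' \<and> Var x = r' \<and> V0 = V0') \<or> D P0 (Var x) V0' \<or> D P0' r' V0" .
    then have "(P0' = P0 \<and> r' = Var x \<and> V0' = V0) \<or> D P0' r' V0 \<or> D P0 (Var x) V0'" by auto
    have "x \<notin> pdom P0'" using c_app e by simp
    from mixed[OF this _ _ _ pr(3) \<open>(P0' = P0 \<and> r' = Var x \<and> V0' = V0) \<or> _\<close>, of H V'] c_app h e
    show ?thesis by auto
  next
    case (c_hered P0' V0' x' H')
    then have e: "pplugt P0 (Var x) = pplugt P0' (Var x')" "x' = x" "plugc H r = plugc H' r'"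
      using pr by (auto simp: pplugt_papp_ctx appES_inj)
    have cx: "cand (Var x)" by (simp add: cand_def)
    from IH[OF \<open>evc P0' V0'\<close>] e cx
    have "(P0 = P0' \<and> V0 = V0') \<or> D P0 (Var x) V0' \<or> D P0' (Var x) V0" by auto
    then show ?thesis
    proof (elim disjE)
      assume eq: "P0 = P0' \<and> V0 = V0'"
      from U_H[OF h(3) \<open>is_H H'\<close> e(3) pr(3,4)]
      show ?thesis using eq c_hered e unfolding D_def by auto
    next
      assume "D P0 (Var x) V0'"
      then show ?thesis using c_hered h e plookup_None[of x P0] unfolding D_def by auto
    next
      assume "D P0' (Var x) V0"
      then show ?thesis using c_hered h e plookup_None[of x P0'] unfolding D_def by auto
    qed
  qed
qed



lemma fvp_appES: "fvp (appES p x s) = (fvp p - {x}) \<union> fv s"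
  by (cases p) (simp add: fvp_def)

lemma pbinders_appES: "pbinders (appES p x s) = pbinders p @ x # bvars s"
  by (cases p) (simp add: pbinders_def)

lemma dom_binders: "fst ` set (snd p) \<subseteq> set (pbinders p)"
  by (cases p) (auto simp: pbinders_def)

lemma wn_appES: "well_named (appES p x s) \<Longrightarrow> well_named p"
  unfolding well_named_def pbinders_appES fvp_appES by auto

lemma wn_app_fv: "well_named (appES p x s) \<Longrightarrow> fv s \<inter> insert x (fst ` set (snd p)) = {}"
  unfolding well_named_def pbinders_appES fvp_appES using dom_binders[of p] by auto

lemma pdom_papp_ctx: "pdom (papp_ctx p x H) = insert x (fst ` set (snd p))"
  by (cases p) auto

lemma W: "evc P V \<Longrightarrow> well_named (pplugt P r) \<Longrightarrow> V \<inter> pdom P = {}"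
proof (induction arbitrary: r rule: evc.induct)
  case (c_base H) then show ?case by simp
next
  case (c_app P V0 x s V)
  have wn: "well_named (appES (pplugt P r) x s)" using c_app.prems by (simp add: pplugt_papp)
  have IH: "V0 \<inter> pdom P = {}" using c_app.IH[OF wn_appES[OF wn]] .
  have d: "fv s \<inter> insert x (pdom P) = {}" using wn_app_fv[OF wn] pdom_pplugt[of P r] by simp
  show ?case using IH d c_app.hyps(3) nv_fv[of s] unfolding addrel_def pdom_papp by auto
next
  case (c_hered P V x H)
  have wn: "well_named (appES (pplugt P (Var x)) x (plugc H r))" using c_hered.prems by (simp add: pplugt_papp_ctx)
  have IH: "V \<inter> pdom P = {}" using c_hered.IH[OF wn_appES[OF wn]] .
  have d: "fv (plugc H r) \<inter> insert x (pdom P) = {}" using wn_app_fv[OF wn] pdom_pplugt[of P "Var x"] by simp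
  show ?case using IH d c_hered.hyps(2) nvC_fv[of H r] unfolding pdom_papp_ctx pdom_pplugt[of P "Var x", symmetric] by auto
qed

lemma ond_raw_wn: "ond_raw p q \<Longrightarrow> well_named p"
  by (induction rule: ond_raw.induct) auto

lemma alpha_prog_refl: "alpha_prog p p"
proof -
  have "alphaR (idG []) (fst p) (fst p) (rev (snd p)) (rev (snd p))"
    by (rule alphaR_idG[OF list_all2_refl_env alphaT_refl_idG])
  then show ?thesis unfolding alpha_prog_def by (simp add: idG_def)
qed

lemma DET1: assumes "ond_raw p q" "ond_raw p q'" shows "alpha_prog q q'"
  using assms(1)
proof (cases rule: ond_raw.cases)
  case (om P V x t u)
  note o1 = om
  have c1: "cand (App (Lam x t) u)" by (simp add: cand_def)
  from assms(2) show ?thesis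
  proof (cases rule: ond_raw.cases)
    case (om P' V' x' t' u')
    have c2: "cand (App (Lam x' t') u')" by (simp add: cand_def)
    from U[OF evctx_evc[OF o1(3)] evctx_evc[OF om(3)] _ c1 c2] o1 om
    have "P = P' \<and> x = x' \<and> t = t' \<and> u = u'" unfolding D_def by auto
    then show ?thesis using o1 om alpha_prog_refl by simp
  next
    case (oe P' V' y v v')
    have c2: "cand (Var y)" by (simp add: cand_def)
    from U[OF evctx_evc[OF o1(3)] evctx_evc[OF oe(3)] _ c1 c2] o1 oe
    have "y \<in> V" unfolding D_def by auto
    moreover have "y \<in> pdom P"
      using plookup_dom[OF oe(5)] pdom_pplugt[of P' "Var y"] pdom_pplugt[of P "App (Lam x t) u"] o1 oe by simp
    moreover have "V \<inter> pdom P = {}" using W[OF evctx_evc[OF o1(3)]] o1 by blast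
    ultimately show ?thesis by blast
  qed
next
  case (oe P V y v v1)
  note o1 = oe
  have c1: "cand (Var y)" by (simp add: cand_def)
  from assms(2) show ?thesis
  proof (cases rule: ond_raw.cases)
    case (om P' V' x' t' u')
    have c2: "cand (App (Lam x' t') u')" by (simp add: cand_def)
    from U[OF evctx_evc[OF o1(3)] evctx_evc[OF om(3)] _ c1 c2] o1 om
    have "y \<in> V'" unfolding D_def by auto
    moreover have "y \<in> pdom P'"
      using plookup_dom[OF o1(5)] pdom_pplugt[of P "Var y"] pdom_pplugt[of P' "App (Lam x' t') u'"] o1 om by simp
    moreover have "V' \<inter> pdom P' = {}" using W[OF evctx_evc[OF om(3)]] om by blast
    ultimately show ?thesis by blast
  next
    case (oe P' V' y' v' v2)
    have c2: "cand (Var y')" by (simp add: cand_def)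
    have pd: "pdom P = pdom P'" using pdom_pplugt[of P "Var y"] pdom_pplugt[of P' "Var y'"] o1 oe by simp
    have W1: "V \<inter> pdom P = {}" using W[OF evctx_evc[OF o1(3)]] o1 by blast
    have W2: "V' \<inter> pdom P' = {}" using W[OF evctx_evc[OF oe(3)]] oe by blast
    have y1: "y \<in> pdom P" using plookup_dom[OF o1(5)] .
    have y2: "y' \<in> pdom P'" using plookup_dom[OF oe(5)] .
    from U[OF evctx_evc[OF o1(3)] evctx_evc[OF oe(3)] _ c1 c2] o1 oe
    have "(P = P' \<and> y = y') \<or> y \<in> V' \<or> y' \<in> V" unfolding D_def by auto
    then have eq: "P = P' \<and> y = y'" using pd W1 W2 y1 y2 by blast
    then have "v = v'" using o1 oe by simp
    then have "alpha_trm v1 v2" using o1 oe alpha_trm_sym alpha_trm_trans by blast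
    then show ?thesis using alpha_prog_pplugt eq o1 oe by simp
  qed
qed



section \<open>Renaming\<close>

fun renT :: "(var \<Rightarrow> var) \<Rightarrow> trm \<Rightarrow> trm" where
  "renT f (Var x) = Var (f x)"
| "renT f (Lam x t) = Lam (f x) (renT f t)"
| "renT f (App t u) = App (renT f t) (renT f u)"

definition renE :: "(var \<Rightarrow> var) \<Rightarrow> env \<Rightarrow> env" where
  "renE f E = map (\<lambda>(x,s). (f x, renT f s)) E"

fun renP :: "(var \<Rightarrow> var) \<Rightarrow> prog \<Rightarrow> prog" where
  "renP f (t, E) = (renT f t, renE f E)"

fun renC :: "(var \<Rightarrow> var) \<Rightarrow> ctx \<Rightarrow> ctx" where
  "renC f Hole = Hole"
| "renC f (CAppL C t) = CAppL (renC f C) (renT f t)"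
| "renC f (CAppR t C) = CAppR (renT f t) (renC f C)"

fun renPC :: "(var \<Rightarrow> var) \<Rightarrow> pctx \<Rightarrow> pctx" where
  "renPC f (PCt C E) = PCt (renC f C) (renE f E)"
| "renPC f (PCe u E1 y C E2) = PCe (renT f u) (renE f E1) (f y) (renC f C) (renE f E2)"

lemma renE_append[simp]: "renE f (E @ E') = renE f E @ renE f E'"
  by (simp add: renE_def)

lemma renE_Cons[simp]: "renE f ((x,s) # E) = (f x, renT f s) # renE f E"
  by (simp add: renE_def)

lemma renE_Nil[simp]: "renE f [] = []"
  by (simp add: renE_def)

lemma renE_rev: "renE f (rev E) = rev (renE f E)"
  by (simp add: renE_def rev_map)

lemma ren_plugc: "renT f (plugc C t) = plugc (renC f C) (renT f t)"
  by (induction C) auto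

lemma ren_pplug: "renP f (pplug P p) = pplug (renPC f P) (renP f p)"
  by (cases P; cases p) (auto simp: ren_plugc)

lemma ren_pplugt: "renP f (pplugt P t) = pplugt (renPC f P) (renT f t)"
  unfolding pplugt_def by (simp add: ren_pplug)

lemma ren_papp: "renPC f (papp P x s) = papp (renPC f P) (f x) (renT f s)"
  by (cases P) auto

lemma ren_papp_ctx: "renPC f (papp_ctx p x H) = papp_ctx (renP f p) (f x) (renC f H)"
  by (cases p) auto

lemma ren_is_value[simp]: "is_value (renT f t) = is_value t"
  by (cases t) auto

lemma ren_inert[simp]: "inert (renT f t) = inert t"
  by (induction t rule: inert.induct) auto

lemma ren_is_H[simp]: "is_H (renC f C) = is_H C"
  by (induction C) auto

lemma ren_nv: "nv (renT f t) = f ` nv t"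
  by (induction t) auto

lemma ren_nvC: "nvC (renC f C) = f ` nvC C"
  by (induction C) (auto simp: ren_nv)

lemma ren_pdom: "pdom (renPC f P) = f ` pdom P"
  by (cases P) (auto simp: renE_def image_image image_Un case_prod_beta)

lemma map_of_ren: "inj f \<Longrightarrow> map_of (renE f E) (f x) = map_option (renT f) (map_of E x)"
  by (induction E) (auto simp: inj_eq)

lemma ren_plookup: "inj f \<Longrightarrow> plookup (renPC f P) (f x) = map_option (renT f) (plookup P x)"
  by (cases P) (auto simp: map_of_ren simp flip: renE_append)

lemma ren_fv: "inj f \<Longrightarrow> fv (renT f t) = f ` fv t"
  by (induction t) (auto simp: image_set_diff)

lemma ren_bvars: "bvars (renT f t) = map f (bvars t)"
  by (induction t) auto

lemma ren_names: "names (renT f t) = f ` names t"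
  by (induction t) auto

lemma ren_fvR: "inj f \<Longrightarrow> fvR (renT f t) (renE f R) = f ` fvR t R"
  by (induction t R rule: fvR.induct) (auto simp: ren_fv image_set_diff image_Un)

lemma ren_fvp: "inj f \<Longrightarrow> fvp (renP f p) = f ` fvp p"
  by (cases p) (simp add: fvp_def ren_fvR flip: renE_rev)

lemma ren_pbinders: "pbinders (renP f p) = map f (pbinders p)"
  by (cases p) (simp add: pbinders_def ren_bvars renE_def map_concat case_prod_beta comp_def)

lemma ren_pnames: "pnames (renP f p) = f ` pnames p"
  by (cases p) (simp add: pnames_def ren_names renE_def image_UN case_prod_beta image_Un)

lemma ren_wn: "inj f \<Longrightarrow> well_named (renP f p) = well_named p"
  unfolding well_named_def
  by (simp add: ren_pbinders ren_fvp distinct_map inj_on_subset[of f UNIV] image_Int[symmetric])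

lemma ren_alv: "inj f \<Longrightarrow> alv G x y \<Longrightarrow> alv (map (\<lambda>(a,b). (f a, f b)) G) (f x) (f y)"
proof (induction G)
  case (Cons p G) then show ?case by (cases p) (auto simp: inj_eq)
qed simp

lemma ren_alphaT: "inj f \<Longrightarrow> alphaT G t u \<Longrightarrow> alphaT (map (\<lambda>(a,b). (f a, f b)) G) (renT f t) (renT f u)"
  by (induction G t u rule: alphaT.induct) (auto simp: ren_alv)

lemma ren_alpha_trm: "inj f \<Longrightarrow> alpha_trm t u \<Longrightarrow> alpha_trm (renT f t) (renT f u)"
  unfolding alpha_trm_def using ren_alphaT[of f "[]"] by simp

lemma ren_evctx: assumes f: "inj f" shows "evctx P V \<Longrightarrow> evctx (renPC f P) (f ` V)"
proof (induction rule: evctx.induct)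
  case (ev_base H)
  then show ?case using evctx.ev_base[of "renC f H"] by (simp add: ren_nvC)
next
  case (ev_inert P V x i)
  have "evctx (papp (renPC f P) (f x) (renT f i)) ((f ` V - {f x}) \<union> nv (renT f i))"
    using ev_inert f by (intro evctx.ev_inert) (auto simp: ren_pdom inj_image_mem_iff)
  then show ?case using f by (simp add: ren_papp ren_nv image_set_diff image_Un)
next
  case (ev_skip P V x t)
  have "evctx (papp (renPC f P) (f x) (renT f t)) (f ` V)"
    using ev_skip f by (intro evctx.ev_skip) (auto simp: ren_pdom inj_image_mem_iff)
  then show ?case by (simp add: ren_papp)
next
  case (ev_hered P V x H)
  have "evctx (papp_ctx (pplugt (renPC f P) (Var (f x))) (f x) (renC f H)) (f ` V \<union> nvC (renC f H))"
    using ev_hered f by (intro evctx.ev_hered) (auto simp: ren_pdom inj_image_mem_iff ren_nvC)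
  then show ?case by (simp add: ren_papp_ctx ren_pplugt ren_nvC image_Un)
qed

lemma ren_ond_raw: assumes f: "inj f" shows "ond_raw p q \<Longrightarrow> ond_raw (renP f p) (renP f q)"
proof (induction rule: ond_raw.induct)
  case (om P V x t u)
  have "ond_raw (pplugt (renPC f P) (App (Lam (f x) (renT f t)) (renT f u)))
                (pplug (renPC f P) (renT f t, [(f x, renT f u)]))"
    using om ren_evctx[OF f om(1)] ren_wn[OF f, of "pplugt P (App (Lam x t) u)"]
    by (intro ond_raw.om) (auto simp: ren_pplugt)
  then show ?case by (simp add: ren_pplugt ren_pplug)
next
  case (oe P V x v v')
  have "ond_raw (pplugt (renPC f P) (Var (f x))) (pplugt (renPC f P) (renT f v'))"
  proof (rule ond_raw.oe)
    show "evctx (renPC f P) (f ` V)" using ren_evctx[OF f oe(1)] .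
    show "well_named (pplugt (renPC f P) (Var (f x)))"
      using ren_wn[OF f, of "pplugt P (Var x)"] oe by (simp add: ren_pplugt)
    show "plookup (renPC f P) (f x) = Some (renT f v)" using ren_plookup[OF f] oe by simp
    show "is_value (renT f v)" using oe by simp
    show "alpha_trm (renT f v) (renT f v')" using ren_alpha_trm[OF f] oe by simp
    have "set (bvars (renT f v')) \<inter> pnames (pplugt (renPC f P) (Var (f x)))
      = f ` (set (bvars v') \<inter> pnames (pplugt P (Var x)))"
      using ren_pnames[of f "pplugt P (Var x)"] f
      by (simp add: ren_bvars ren_pplugt image_Int)
    then show "set (bvars (renT f v')) \<inter> pnames (pplugt (renPC f P) (Var (f x))) = {}"
      using oe by simp
  qed
  then show ?case by (simp add: ren_pplugt)
qed



section \<open>Renaming is alpha when free variables are fixed\<close>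

lemma ren_alphaT_id: "inj f \<Longrightarrow> (\<forall>z\<in>fv t. alv G z (f z)) \<Longrightarrow> alphaT G t (renT f t)"
proof (induction t arbitrary: G)
  case (Lam x t)
  have "\<forall>z\<in>fv t. alv ((x, f x) # G) z (f z)"
    using Lam.prems by (auto simp: inj_eq)
  then show ?case using Lam.IH[OF Lam.prems(1)] by simp
qed auto

lemma ren_alphaR_id: "inj f \<Longrightarrow> (\<forall>z\<in>fvR t R. alv G z (f z)) \<Longrightarrow> alphaR G t (renT f t) R (renE f R)"
proof (induction R arbitrary: G)
  case Nil then show ?case using ren_alphaT_id by simp
next
  case (Cons p R)
  obtain x s where p: "p = (x,s)" by force
  have "\<forall>z\<in>fvR t R. alv ((x, f x) # G) z (f z)"
    using Cons.prems p by (auto simp: inj_eq)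
  moreover have "\<forall>z\<in>fv s. alv G z (f z)" using Cons.prems p by auto
  ultimately show ?case using Cons.IH[OF Cons.prems(1)] ren_alphaT_id[OF Cons.prems(1)] p by simp
qed

lemma ren_alpha_prog_id: "inj f \<Longrightarrow> (\<forall>z\<in>fvp q. f z = z) \<Longrightarrow> alpha_prog q (renP f q)"
  using ren_alphaR_id[of f "fst q" "rev (snd q)" "[]"]
  by (cases q) (auto simp: alpha_prog_def fvp_def renE_rev)

section \<open>Free variables do not grow\<close>

fun envfv :: "env \<Rightarrow> var set \<Rightarrow> var set" where
  "envfv [] S = S"
| "envfv ((x,s) # R) S = (envfv R S - {x}) \<union> fv s"

lemma fvR_envfv: "fvR t R = envfv R (fv t)"
  by (induction t R rule: fvR.induct) auto

lemma envfv_append: "envfv (R @ R') S = envfv R (envfv R' S)"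
  by (induction R arbitrary: S) auto

lemma envfv_Un: "envfv R (A \<union> B) = envfv R A \<union> envfv R B"
  by (induction R) auto

lemma envfv_mono: "A \<subseteq> B \<Longrightarrow> envfv R A \<subseteq> envfv R B"
  by (induction R) auto

lemma envfv_keep: "z \<in> S \<Longrightarrow> z \<notin> fst ` set R \<Longrightarrow> z \<in> envfv R S"
  by (induction R S rule: envfv.induct) auto

lemma envfv_lookup: "map_of E y = Some v \<Longrightarrow> envfv (rev E) (fv v) \<subseteq> envfv (rev E) {y}"
proof (induction E)
  case Nil then show ?case by simp
next
  case (Cons p E)
  obtain a s where p: "p = (a,s)" by force
  show ?case
  proof (cases "a = y")
    case True
    then have "v = s" using Cons.prems p by simp
    then show ?thesis using p True by (simp add: envfv_append envfv_mono)
  next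
    case False
    then have m: "map_of E y = Some v" using Cons.prems p by simp
    have "envfv (rev E) ((fv v - {a}) \<union> fv s) \<subseteq> envfv (rev E) (fv v) \<union> envfv (rev E) (fv s)"
      using envfv_mono[of "(fv v - {a}) \<union> fv s" "fv v \<union> fv s"] envfv_Un by auto
    also have "\<dots> \<subseteq> envfv (rev E) {y} \<union> envfv (rev E) (fv s)" using Cons.IH[OF m] by auto
    also have "\<dots> = envfv (rev E) (({y} - {a}) \<union> fv s)" using False envfv_Un[symmetric] by auto
    finally show ?thesis using p by (simp add: envfv_append)
  qed
qed

lemma fv_plugc_diff: "fv a - X \<subseteq> fv b \<Longrightarrow> fv (plugc C a) - X \<subseteq> fv (plugc C b)"
  by (induction C) auto

lemma fv_plugc_sub: "fv (plugc C a) \<subseteq> fv (plugc C b) \<union> fv a"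
  by (induction C) auto

lemma fv_plugc_in: "fv a \<subseteq> fv (plugc C a)"
  by (induction C) auto

lemma alv_free: "alv G x y \<Longrightarrow> x \<notin> fst ` set G \<Longrightarrow> x = y \<and> y \<notin> snd ` set G"
proof (induction G)
  case (Cons p G) then show ?case by (cases p) auto
qed simp

lemma alphaT_fv: "alphaT G t u \<Longrightarrow> z \<in> fv t \<Longrightarrow> z \<notin> fst ` set G \<Longrightarrow> z \<in> fv u \<and> z \<notin> snd ` set G"
proof (induction G t u rule: alphaT.induct)
  case (1 G x y)
  then show ?case using alv_free[of G x y] by auto
next
  case (2 G x t y u)
  then show ?case by auto
qed auto

lemma alpha_trm_fv: "alpha_trm t u \<Longrightarrow> fv u = fv t"
  using alphaT_fv[of "[]" t u] alphaT_fv[of "[]" u t] alpha_trm_sym[of t u]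
  unfolding alpha_trm_def by auto

lemma fvp_pair: "fvp (t, E) = envfv (rev E) (fv t)"
  by (simp add: fvp_def fvR_envfv)

lemma fvp_om: "fvp (pplug P (t, [(x, u)])) \<subseteq> fvp (pplugt P (App (Lam x t) u))"
proof (cases P)
  case (PCt C E)
  have "(fv (plugc C t) - {x}) \<union> fv u \<subseteq> fv (plugc C (App (Lam x t) u))"
    using fv_plugc_diff[of t "{x}" "App (Lam x t) u" C] fv_plugc_in[of "App (Lam x t) u" C] by auto
  then have "envfv (rev E) ((fv (plugc C t) - {x}) \<union> fv u) \<subseteq> envfv (rev E) (fv (plugc C (App (Lam x t) u)))"
    by (rule envfv_mono)
  then show ?thesis using PCt
    by (simp add: pplugt_def fvp_pair envfv_append)
next
  case (PCe u0 E1 y C E2)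
  let ?S = "envfv (rev E1) (fv u0) - {y}"
  have "((?S \<union> fv (plugc C t)) - {x}) \<union> fv u \<subseteq> ?S \<union> fv (plugc C (App (Lam x t) u))"
    using fv_plugc_diff[of t "{x}" "App (Lam x t) u" C] fv_plugc_in[of "App (Lam x t) u" C] by auto
  then have "envfv (rev E2) (((?S \<union> fv (plugc C t)) - {x}) \<union> fv u) \<subseteq> envfv (rev E2) (?S \<union> fv (plugc C (App (Lam x t) u)))"
    by (rule envfv_mono)
  then show ?thesis using PCe
    by (simp add: pplugt_def fvp_pair envfv_append)
qed

lemma in_concat_binders: "y \<in> fst ` set E \<Longrightarrow> y \<in> set (concat (map (\<lambda>(x,s). x # bvars s) E))"
  by (induction E) auto

lemma fvp_oe:
  assumes wn: "well_named (pplugt P (Var y))" and lk: "plookup P y = Some v" and a: "alpha_trm v v'"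
  shows "fvp (pplugt P v') \<subseteq> fvp (pplugt P (Var y))"
proof -
  have fvv: "fv v' = fv v" using alpha_trm_fv[OF a] .
  show ?thesis
  proof (cases P)
    case (PCt C E)
    have m: "map_of E y = Some v" using lk PCt by simp
    have "envfv (rev E) (fv (plugc C v')) \<subseteq> envfv (rev E) (fv (plugc C (Var y)) \<union> fv v)"
      by (rule envfv_mono) (use fv_plugc_sub[of C v' "Var y"] fvv in simp)
    also have "\<dots> \<subseteq> envfv (rev E) (fv (plugc C (Var y))) \<union> envfv (rev E) {y}"
      by (simp only: envfv_Un) (use envfv_lookup[OF m] in blast)
    also have "\<dots> = envfv (rev E) (fv (plugc C (Var y)))"
    proof -
      have "fv (plugc C (Var y)) \<union> {y} = fv (plugc C (Var y))" using fv_plugc_in[of "Var y" C] by auto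
      then show ?thesis using envfv_Un[of "rev E" "fv (plugc C (Var y))" "{y}"] by simp
    qed
    finally show ?thesis using PCt by (simp add: pplugt_def fvp_pair)
  next
    case (PCe u0 E1 y0 C E2)
    let ?S = "envfv (rev E1) (fv u0) - {y0}"
    have fp: "fvp (pplugt P s) = envfv (rev E2) (?S \<union> fv (plugc C s))" for s
      using PCe by (simp add: pplugt_def fvp_pair envfv_append)
    have yE1: "y \<notin> fst ` set E1"
    proof
      assume yE1: "y \<in> fst ` set E1"
      have d: "distinct (pbinders (pplugt P (Var y)))" "set (pbinders (pplugt P (Var y))) \<inter> fvp (pplugt P (Var y)) = {}"
        using wn unfolding well_named_def by auto
      have pb: "pbinders (pplugt P (Var y)) = bvars u0 @ concat (map (\<lambda>(x,s). x # bvars s) E1)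
          @ (y0 # bvars (plugc C (Var y))) @ concat (map (\<lambda>(x,s). x # bvars s) E2)"
        using PCe by (simp add: pplugt_def pbinders_def)
      moreover have y1: "y \<in> set (concat (map (\<lambda>(x,s). x # bvars s) E1))" using in_concat_binders[OF yE1] .
      ultimately have b: "y \<in> set (pbinders (pplugt P (Var y)))" by simp
      have dd: "\<And>a b c e. distinct (a @ b @ c @ e) \<Longrightarrow> set b \<inter> set e = {}" by auto
      have "distinct (bvars u0 @ concat (map (\<lambda>(x,s). x # bvars s) E1)
          @ (y0 # bvars (plugc C (Var y))) @ concat (map (\<lambda>(x,s). x # bvars s) E2))"
        using d(1) unfolding pb .
      from dd[OF this] have nE2: "y \<notin> set (concat (map (\<lambda>(x,s). x # bvars s) E2))"
        using y1 by blast
      have "y \<notin> fst ` set E2" using nE2 in_concat_binders by blast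
      moreover have "y \<in> ?S \<union> fv (plugc C (Var y))" using fv_plugc_in[of "Var y" C] by auto
      ultimately have "y \<in> envfv (rev E2) (?S \<union> fv (plugc C (Var y)))"
        by (intro envfv_keep) auto
      then have "y \<in> fvp (pplugt P (Var y))" unfolding fp .
      then show False using b d(2) by blast
    qed
    then have m: "map_of E2 y = Some v" using lk PCe by (simp add: map_add_def map_of_None' split: option.splits)
    have "envfv (rev E2) (?S \<union> fv (plugc C v')) \<subseteq> envfv (rev E2) (?S \<union> fv (plugc C (Var y)) \<union> fv v)"
    proof (rule envfv_mono)
      show "?S \<union> fv (plugc C v') \<subseteq> ?S \<union> fv (plugc C (Var y)) \<union> fv v"
        using fv_plugc_sub[of C v' "Var y"] fvv by auto
    qed
    also have "\<dots> \<subseteq> envfv (rev E2) (?S \<union> fv (plugc C (Var y))) \<union> envfv (rev E2) {y}"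
      by (simp only: envfv_Un) (use envfv_lookup[OF m] in blast)
    also have "\<dots> = envfv (rev E2) (?S \<union> fv (plugc C (Var y)))"
    proof -
      have "(?S \<union> fv (plugc C (Var y))) \<union> {y} = ?S \<union> fv (plugc C (Var y))" using fv_plugc_in[of "Var y" C] by auto
      then show ?thesis using envfv_Un[of "rev E2" "?S \<union> fv (plugc C (Var y))" "{y}"] by simp
    qed
    finally show ?thesis unfolding fp .
  qed
qed

lemma fvp_step: "ond_raw p q \<Longrightarrow> fvp q \<subseteq> fvp p"
proof (induction rule: ond_raw.induct)
  case (om P V x t u) then show ?case using fvp_om by blast
next
  case (oe P V x v v') then show ?case using fvp_oe by blast
qed



section \<open>An injective renaming relating two well-named alpha-equivalent programs\<close>

lemma exists_inj:
  fixes A B :: "var list" and F :: "var set"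
  assumes dA: "distinct A" and dB: "distinct B" and len: "length A = length B"
    and AF: "set A \<inter> F = {}" and BF: "set B \<inter> F = {}"
  shows "\<exists>f. inj f \<and> map f A = B \<and> (\<forall>z\<in>F. f z = z)"
proof -
  have cA: "card (set A) = card (set B)" using distinct_card[OF dA] distinct_card[OF dB] len by simp
  have "card (set B - set A) = card (set A - set B)"
    using card_Diff_subset_Int[of "set B" "set A"] card_Diff_subset_Int[of "set A" "set B"] cA
    by (simp add: Int_commute)
  then obtain h where h: "bij_betw h (set B - set A) (set A - set B)"
    using finite_same_card_bij[of "set B - set A" "set A - set B"] by auto
  define m where "m = map_of (zip A B)"
  define f where "f z = (case m z of Some b \<Rightarrow> b | None \<Rightarrow> (if z \<in> set B then h z else z))" for z
  have mA: "\<And>i. i < length A \<Longrightarrow> m (A ! i) = Some (B ! i)"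
    unfolding m_def using map_of_zip_nth[OF len dA] len by simp
  have mNone: "\<And>z. z \<notin> set A \<Longrightarrow> m z = None"
    unfolding m_def using len by (auto simp: map_of_eq_None_iff dest: set_zip_leftD)
  have mapf: "map f A = B"
  proof (rule nth_equalityI)
    show "length (map f A) = length B" using len by simp
    fix i assume "i < length (map f A)"
    then show "map f A ! i = B ! i" using mA[of i] by (simp add: f_def)
  qed
  have injA: "inj_on f (set A)" using dB unfolding mapf[symmetric] by (simp add: distinct_map)
  have fA: "f z \<in> set B" if "z \<in> set A" for z
  proof -
    have "f z \<in> set (map f A)" using that by simp
    then show ?thesis using mapf by simp
  qed
  have fB: "z \<notin> set A \<Longrightarrow> z \<in> set B \<Longrightarrow> f z = h z" for z using mNone by (simp add: f_def)
  have fO: "z \<notin> set A \<Longrightarrow> z \<notin> set B \<Longrightarrow> f z = z" for z using mNone by (simp add: f_def)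
  have hB: "z \<notin> set A \<Longrightarrow> z \<in> set B \<Longrightarrow> h z \<in> set A - set B" for z
    using h unfolding bij_betw_def by auto
  have injh: "inj_on h (set B - set A)" using h unfolding bij_betw_def by auto
  have rB: "f z \<in> set A \<and> f z \<notin> set B" if "z \<notin> set A" "z \<in> set B" for z
    using fB[OF that] hB[OF that] by simp
  have "inj f"
  proof (rule injI)
    fix x y assume e: "f x = f y"
    show "x = y"
    proof (cases "x \<in> set A")
      case xA: True
      show ?thesis
      proof (cases "y \<in> set A")
        case True then show ?thesis using inj_onD[OF injA e xA] by simp
      next
        case yA: False
        show ?thesis
        proof (cases "y \<in> set B")
          case True
          have "f y \<notin> set B" using rB[OF yA True] by simp
          moreover have "f y \<in> set B" using fA[OF xA] e by simp
          ultimately show ?thesis by simp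
        next
          case False
          have "f y = y" using fO[OF yA False] .
          then have "y \<in> set B" using fA[OF xA] e by simp
          then show ?thesis using False by simp
        qed
      qed
    next
      case xA: False
      show ?thesis
      proof (cases "x \<in> set B")
        case xB: True
        show ?thesis
        proof (cases "y \<in> set A")
          case yA: True
          have "f x \<notin> set B" using rB[OF xA xB] by simp
          moreover have "f x \<in> set B" using fA[OF yA] e by simp
          ultimately show ?thesis by simp
        next
          case yA: False
          show ?thesis
          proof (cases "y \<in> set B")
            case yB: True
            have "h x = h y" using e fB[OF xA xB] fB[OF yA yB] by simp
            then show ?thesis using inj_onD[OF injh] xA xB yA yB by simp
          next
            case yB: False
            have "f y = y" using fO[OF yA yB] .
            then have "y \<in> set A" using rB[OF xA xB] e by simp
            then show ?thesis using yA by simp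
          qed
        qed
      next
        case xB: False
        have fx: "f x = x" using fO[OF xA xB] .
        show ?thesis
        proof (cases "y \<in> set A")
          case yA: True
          have "x \<in> set B" using fA[OF yA] e fx by simp
          then show ?thesis using xB by simp
        next
          case yA: False
          show ?thesis
          proof (cases "y \<in> set B")
            case yB: True
            have "x \<in> set A" using rB[OF yA yB] e fx by simp
            then show ?thesis using xA by simp
          next
            case yB: False
            show ?thesis using fO[OF yA yB] e fx by simp
          qed
        qed
      qed
    qed
  qed
  moreover have "\<forall>z\<in>F. f z = z" using AF BF fO by blast
  ultimately show ?thesis using mapf by blast
qed

definition bg :: "var \<times> trm \<Rightarrow> var list" where
  "bg = (\<lambda>(x,s). x # bvars s)"

lemma bg_simp[simp]: "bg (x,s) = x # bvars s"
  by (simp add: bg_def)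

lemma pbinders_bg: "pbinders (t, E) = bvars t @ concat (map bg E)"
  by (simp add: pbinders_def bg_def)

lemma alphaT_len: "alphaT G t u \<Longrightarrow> length (bvars t) = length (bvars u)"
  by (induction G t u rule: alphaT.induct) auto

lemma alphaR_len: "alphaR G t u R R' \<Longrightarrow>
  length (bvars t @ concat (map bg (rev R))) = length (bvars u @ concat (map bg (rev R')))"
  by (induction G t u R R' rule: alphaR.induct) (auto simp: alphaT_len)

lemma alphaR_fv: "alphaR G t u R R' \<Longrightarrow> z \<in> fvR t R \<Longrightarrow> z \<notin> fst ` set G \<Longrightarrow>
   z \<in> fvR u R' \<and> z \<notin> snd ` set G"
proof (induction G t u R R' rule: alphaR.induct)
  case (1 G t u) then show ?case using alphaT_fv by simp
next
  case (2 G t u x s R y s' R')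
  show ?case
  proof (cases "z \<in> fv s")
    case True
    then show ?thesis using alphaT_fv[of G s s' z] 2 by simp
  next
    case False
    then have "z \<in> fvR t R" "z \<noteq> x" using 2 by auto
    then have "z \<in> fvR u R' \<and> z \<notin> snd ` set ((x,y) # G)" using 2 by auto
    then show ?thesis by auto
  qed
qed auto

lemma alv_f: "alv G x y \<Longrightarrow> (\<forall>(a,b)\<in>set G. f a = b) \<Longrightarrow> (x \<notin> fst ` set G \<longrightarrow> f x = x) \<Longrightarrow> f x = y"
proof (induction G)
  case (Cons p G) then show ?case by (cases p) auto
qed simp

lemma REN_T: "alphaT G t u \<Longrightarrow> (\<forall>(a,b)\<in>set G. f a = b) \<Longrightarrow> (\<forall>z\<in>fv t. z \<notin> fst ` set G \<longrightarrow> f z = z)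
  \<Longrightarrow> map f (bvars t) = bvars u \<Longrightarrow> renT f t = u"
proof (induction G t u rule: alphaT.induct)
  case (1 G x y) then show ?case using alv_f[of G x y f] by simp
next
  case (2 G x t y u)
  have "f x = y" "map f (bvars t) = bvars u" using "2.prems"(4) by simp_all
  moreover have "\<forall>(a,b)\<in>set ((x,y)#G). f a = b" using "2.prems"(2) \<open>f x = y\<close> by auto
  moreover have "\<forall>z\<in>fv t. z \<notin> fst ` set ((x,y)#G) \<longrightarrow> f z = z" using "2.prems"(3) by auto
  ultimately show ?case using "2.IH" "2.prems" by simp
next
  case (3 G t1 t2 u1 u2)
  have "alphaT G t1 u1" using "3.prems"(1) by simp
  then have l: "length (map f (bvars t1)) = length (bvars u1)" using alphaT_len by simp
  have "map f (bvars t1) = bvars u1" "map f (bvars t2) = bvars u2"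
    using "3.prems"(4) l by simp_all
  then show ?case using "3.IH" "3.prems" by simp
qed simp_all

lemma REN_R: "alphaR G t u R R' \<Longrightarrow> (\<forall>(a,b)\<in>set G. f a = b) \<Longrightarrow> (\<forall>z\<in>fvR t R. z \<notin> fst ` set G \<longrightarrow> f z = z)
  \<Longrightarrow> map f (bvars t @ concat (map bg (rev R))) = bvars u @ concat (map bg (rev R'))
  \<Longrightarrow> renT f t = u \<and> renE f R = R'"
proof (induction G t u R R' rule: alphaR.induct)
  case (1 G t u) then show ?case using REN_T by simp
next
  case (2 G t u x s R y s' R')
  have al: "alphaR ((x,y)#G) t u R R'" "alphaT G s s'" using "2.prems" by simp_all
  have l: "length (map f (bvars t @ concat (map bg (rev R)))) = length (bvars u @ concat (map bg (rev R')))"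
    using alphaR_len[OF al(1)] by simp
  have eq: "map f (bvars t @ concat (map bg (rev R))) @ (f x # map f (bvars s))
      = (bvars u @ concat (map bg (rev R'))) @ (y # bvars s')"
    using "2.prems"(4) by simp
  have m0: "map f (bvars t @ concat (map bg (rev R))) = bvars u @ concat (map bg (rev R'))
     \<and> f x # map f (bvars s) = y # bvars s'"
    using eq unfolding append_eq_append_conv[OF disjI1[OF l]] .
  then have m: "map f (bvars t @ concat (map bg (rev R))) = bvars u @ concat (map bg (rev R'))"
    "f x = y" "map f (bvars s) = bvars s'" by simp_all
  have "\<forall>(a,b)\<in>set ((x,y)#G). f a = b" using "2.prems"(2) m(2) by auto
  moreover have "\<forall>z\<in>fvR t R. z \<notin> fst ` set ((x,y)#G) \<longrightarrow> f z = z" using "2.prems"(3) by auto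
  ultimately have "renT f t = u \<and> renE f R = R'" using "2.IH"[OF al(1) _ _ m(1)] by blast
  moreover have "renT f s = s'"
    using REN_T[OF al(2) "2.prems"(2) _ m(3)] "2.prems"(3) by auto
  ultimately show ?case using m(2) by simp
qed simp_all

lemma ren_exists:
  assumes w0: "well_named p0" and w1: "well_named p1" and a: "alpha_prog p0 p1"
  shows "\<exists>f. inj f \<and> renP f p0 = p1 \<and> (\<forall>z\<in>fvp p0. f z = z)"
proof -
  obtain t0 E0 where p0: "p0 = (t0, E0)" by force
  obtain t1 E1 where p1: "p1 = (t1, E1)" by force
  have aR: "alphaR [] t0 t1 (rev E0) (rev E1)" using a p0 p1 by (simp add: alpha_prog_def)
  have len: "length (pbinders p0) = length (pbinders p1)"
    using alphaR_len[OF aR] p0 p1 by (simp add: pbinders_bg)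
  have fvsub: "fvp p0 \<subseteq> fvp p1"
    using alphaR_fv[OF aR] p0 p1 by (auto simp: fvp_def)
  have "distinct (pbinders p0)" "distinct (pbinders p1)"
    "set (pbinders p0) \<inter> fvp p0 = {}" "set (pbinders p1) \<inter> fvp p0 = {}"
    using w0 w1 fvsub unfolding well_named_def by auto
  from exists_inj[OF this(1,2) len this(3,4)]
  obtain f where f: "inj f" "map f (pbinders p0) = pbinders p1" "\<forall>z\<in>fvp p0. f z = z" by blast
  have "renT f t0 = t1 \<and> renE f (rev E0) = rev E1"
    using REN_R[OF aR] f p0 p1 by (simp add: pbinders_bg fvp_def)
  then have "renP f p0 = p1" using p0 p1 by (simp add: renE_rev)
  then show ?thesis using f by blast
qed

theorem mainTheorem2:
  assumes "ond p q" and "ond p q'"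
  shows "alpha_prog q q'"
proof -
  obtain p0 q0 where a0: "alpha_prog p p0" "ond_raw p0 q0" "alpha_prog q0 q"
    using assms(1) unfolding ond_def by blast
  obtain p1 q1 where a1: "alpha_prog p p1" "ond_raw p1 q1" "alpha_prog q1 q'"
    using assms(2) unfolding ond_def by blast
  have "alpha_prog p0 p1" using alpha_prog_trans[OF alpha_prog_sym[OF a0(1)] a1(1)] .
  from ren_exists[OF ond_raw_wn[OF a0(2)] ond_raw_wn[OF a1(2)] this]
  obtain f where f: "inj f" "renP f p0 = p1" "\<forall>z\<in>fvp p0. f z = z" by blast
  have "ond_raw p1 (renP f q0)" using ren_ond_raw[OF f(1) a0(2)] f(2) by simp
  then have b1: "alpha_prog (renP f q0) q1" using DET1[OF _ a1(2)] by blast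
  have "\<forall>z\<in>fvp q0. f z = z" using f(3) fvp_step[OF a0(2)] by blast
  then have b2: "alpha_prog q0 (renP f q0)" using ren_alpha_prog_id[OF f(1)] by blast
  have "alpha_prog q q0" using alpha_prog_sym[OF a0(3)] .
  then have "alpha_prog q (renP f q0)" using b2 by (rule alpha_prog_trans)
  then have "alpha_prog q q1" using b1 by (rule alpha_prog_trans)
  then show ?thesis using a1(3) by (rule alpha_prog_trans)
qed

end
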